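(* In any execution of the algorithm described in the context on a camera object $S$ and an associated versioned CAS object $O$ (after $O$'s constructor has completed), in every configuration the only VNode in the version list of $O$ that can have an invalid timestamp is the head of the version list.
   Context: Camera $S$ has an integer field timestamp, initially 0; takeSnapshot(): read $t:=S.\mathit{timestamp}$, perform CAS$(S.\mathit{timestamp},t,t+1)$, return $t$. A VNode has fields val and nextv (both immutable after creation) and ts (an integer or special value TBD, initially TBD). Versioned CAS object $O$ has a field $\mathit{VHead}$. Constructor with value $v$: $\mathit{VHead}:=$ new VNode(val $v$, nextv NULL); initTS($\mathit{VHead}$). initTS($n$): if $n.ts=$TBD, read $c:=S.\mathit{timestamp}$ and CAS$(n.ts,\mathrm{TBD},c)$. readSnapshot($ts$): $node:=\mathit{VHead}$; initTS($node$); while $node.ts>ts$, $node:=node.nextv$; return $node.val$. vRead(): $h:=\mathit{VHead}$; initTS($h$); return $h.val$. vCAS(oldV,newV): $h:=\mathit{VHead}$; initTS($h$); if $h.val\neq$ oldV return false; if newV $=$ oldV return true; $m:=$ new VNode(val newV, nextv $h$); if CAS$(\mathit{VHead},h,m)$ succeeds, initTS($m$) and return true; else delete $m$, call initTS on the current value of $\mathit{VHead}$, return false. The version list of $O$ is obtained by starting at the VNode pointed to by $\mathit{VHead}$ and following nextv pointers; its head is the VNode pointed to by $\mathit{VHead}$. A VNode's timestamp is valid in a configuration if its ts field is not TBD there, and invalid otherwise. *)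

theory Defs
  imports Main
begin

(* Interleaving model of the camera S and versioned CAS object O.
   Timestamps are integers; ts = None encodes TBD.  VNodes live in a heap
   indexed by nat (node "addresses"); NULL nextv is None. *)

record 'v vnode =
  vval  :: 'v
  vnext :: "nat option"
  vts   :: "int option"

(* what to do after initTS(n) finishes *)
datatype 'v after =
    AfterVRead            (* vRead: return n.val *)
  | AfterRS int           (* readSnapshot(ts): start traversal at n *)
  | AfterVCAS 'v 'v       (* vCAS(oldV,newV): continue with h = n *)
  | AfterDone

(* local program counter of a process; each transition performs at most
   one shared-memory access (read / write / CAS / allocation) *)
datatype 'v pc =
    Idle
  | Snap_Read
  | Snap_CAS int
  | Head_Read "'v after"
  | Init_ReadTS nat "'v after"
  | Init_ReadCam nat "'v after"
  | Init_CAS nat int "'v after"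
  | RS_Loop int nat
  | VCAS_Check 'v 'v nat
  | VCAS_CAS nat nat
  | VCAS_FailRead

record ('p, 'v) conf =
  cam   :: int                       (* S.timestamp *)
  vhead :: nat
  heap  :: "nat \<Rightarrow> 'v vnode option"
  pcs   :: "'p \<Rightarrow> 'v pc"

definition setpc :: "('p, 'v) conf \<Rightarrow> 'p \<Rightarrow> 'v pc \<Rightarrow> ('p, 'v) conf" where
  "setpc c p x = c\<lparr>pcs := (pcs c)(p := x)\<rparr>"

fun cont :: "nat \<Rightarrow> 'v after \<Rightarrow> 'v pc" where
  "cont n AfterVRead = Idle"
| "cont n (AfterRS t) = RS_Loop t n"
| "cont n (AfterVCAS ov nv) = VCAS_Check ov nv n"
| "cont n AfterDone = Idle"

(* one iteration of the readSnapshot loop: read node.ts (and the immutable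
   node.nextv); continue while node.ts > ts, otherwise return node.val *)
fun rs_next :: "int \<Rightarrow> 'v vnode option \<Rightarrow> 'v pc" where
  "rs_next t (Some nd) =
     (case vts nd of
        Some x \<Rightarrow> (if x > t then (case vnext nd of Some m \<Rightarrow> RS_Loop t m | None \<Rightarrow> Idle) else Idle)
      | None \<Rightarrow> Idle)"
| "rs_next t None = Idle"

inductive pstep :: "'p \<Rightarrow> ('p, 'v) conf \<Rightarrow> ('p, 'v) conf \<Rightarrow> bool" where
  inv_snap: "pcs c p = Idle \<Longrightarrow> pstep p c (setpc c p Snap_Read)"
| inv_vread: "pcs c p = Idle \<Longrightarrow> pstep p c (setpc c p (Head_Read AfterVRead))"
| inv_rs: "pcs c p = Idle \<Longrightarrow> pstep p c (setpc c p (Head_Read (AfterRS t)))"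
| inv_vcas: "pcs c p = Idle \<Longrightarrow> pstep p c (setpc c p (Head_Read (AfterVCAS ov nv)))"
| snap_read: "pcs c p = Snap_Read \<Longrightarrow> pstep p c (setpc c p (Snap_CAS (cam c)))"
| snap_cas_ok: "pcs c p = Snap_CAS t \<Longrightarrow> cam c = t \<Longrightarrow>
     pstep p c ((setpc c p Idle)\<lparr>cam := t + 1\<rparr>)"
| snap_cas_fail: "pcs c p = Snap_CAS t \<Longrightarrow> cam c \<noteq> t \<Longrightarrow> pstep p c (setpc c p Idle)"
| head_read: "pcs c p = Head_Read k \<Longrightarrow> pstep p c (setpc c p (Init_ReadTS (vhead c) k))"
| init_valid: "pcs c p = Init_ReadTS n k \<Longrightarrow> vts (the (heap c n)) \<noteq> None \<Longrightarrow>
     pstep p c (setpc c p (cont n k))"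
| init_tbd: "pcs c p = Init_ReadTS n k \<Longrightarrow> vts (the (heap c n)) = None \<Longrightarrow>
     pstep p c (setpc c p (Init_ReadCam n k))"
| init_readcam: "pcs c p = Init_ReadCam n k \<Longrightarrow> pstep p c (setpc c p (Init_CAS n (cam c) k))"
| init_cas: "pcs c p = Init_CAS n t k \<Longrightarrow>
     pstep p c ((setpc c p (cont n k))\<lparr>heap := (heap c)(n :=
        map_option (\<lambda>nd. if vts nd = None then nd\<lparr>vts := Some t\<rparr> else nd) (heap c n))\<rparr>)"
| rs_loop: "pcs c p = RS_Loop t n \<Longrightarrow> pstep p c (setpc c p (rs_next t (heap c n)))"
| vcas_ret: "pcs c p = VCAS_Check ov nv h \<Longrightarrow> vval (the (heap c h)) \<noteq> ov \<or> nv = ov \<Longrightarrow>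
     pstep p c (setpc c p Idle)"
| vcas_alloc: "pcs c p = VCAS_Check ov nv h \<Longrightarrow> vval (the (heap c h)) = ov \<Longrightarrow> nv \<noteq> ov \<Longrightarrow>
     heap c m = None \<Longrightarrow>
     pstep p c ((setpc c p (VCAS_CAS h m))\<lparr>heap := (heap c)(m \<mapsto>
        \<lparr>vval = nv, vnext = Some h, vts = None\<rparr>)\<rparr>)"
| vcas_cas_ok: "pcs c p = VCAS_CAS h m \<Longrightarrow> vhead c = h \<Longrightarrow>
     pstep p c ((setpc c p (Init_ReadTS m AfterDone))\<lparr>vhead := m\<rparr>)"
| vcas_cas_fail: "pcs c p = VCAS_CAS h m \<Longrightarrow> vhead c \<noteq> h \<Longrightarrow>
     pstep p c ((setpc c p VCAS_FailRead)\<lparr>heap := (heap c)(m := None)\<rparr>)"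
| vcas_failread: "pcs c p = VCAS_FailRead \<Longrightarrow>
     pstep p c (setpc c p (Init_ReadTS (vhead c) AfterDone))"

(* configurations right after O's constructor has completed: VHead points to
   the single node created by the constructor, whose ts has been initialised;
   other processes may be idle or in the middle of takeSnapshot *)
definition initial :: "('p, 'v) conf \<Rightarrow> bool" where
  "initial c \<longleftrightarrow> (\<exists>n0 v t. vhead c = n0 \<and>
      heap c = [n0 \<mapsto> \<lparr>vval = v, vnext = None, vts = Some t\<rparr>] \<and>
      (\<forall>p. pcs c p = Idle \<or> pcs c p = Snap_Read \<or> (\<exists>t'. pcs c p = Snap_CAS t')))"

inductive reach :: "('p, 'v) conf \<Rightarrow> bool" where
  reach_init: "initial c \<Longrightarrow> reach c"
| reach_step: "reach c \<Longrightarrow> pstep p c c' \<Longrightarrow> reach c'"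

inductive_set vlist :: "('p, 'v) conf \<Rightarrow> nat set" for c where
  vl_head: "vhead c \<in> vlist c"
| vl_next: "n \<in> vlist c \<Longrightarrow> heap c n = Some nd \<Longrightarrow> vnext nd = Some m \<Longrightarrow> m \<in> vlist c"

end

theory Submission
  imports Defs
begin

lemma vlist_frame_sub:
  assumes "x \<in> vlist c'" and "vhead c' = vhead c"
    and "\<forall>n\<in>vlist c. map_option vnext (heap c' n) = map_option vnext (heap c n)"
  shows "x \<in> vlist c"
  using assms(1)
proof (induction rule: vlist.induct)
  case vl_head then show ?case using assms(2) by (simp add: vlist.vl_head)
next
  case (vl_next n nd m)
  then obtain nd' where "heap c n = Some nd'" "vnext nd' = Some m"
    using assms(3) by (cases "heap c n") auto
  then show ?case using vl_next vlist.vl_next by blast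
qed

lemma vlist_frame_sup:
  assumes "x \<in> vlist c" and "vhead c' = vhead c"
    and "\<forall>n\<in>vlist c. map_option vnext (heap c' n) = map_option vnext (heap c n)"
  shows "x \<in> vlist c'"
  using assms(1)
proof (induction rule: vlist.induct)
  case vl_head then show ?case using assms(2) vlist.vl_head by metis
next
  case (vl_next n nd m)
  then obtain nd' where "heap c' n = Some nd'" "vnext nd' = Some m"
    using assms(3) by (cases "heap c' n") auto
  then show ?case using vl_next vlist.vl_next by blast
qed

lemma vlist_frame:
  assumes "vhead c' = vhead c"
    and "\<forall>n\<in>vlist c. map_option vnext (heap c' n) = map_option vnext (heap c n)"
  shows "vlist c' = vlist c"
  using vlist_frame_sub[OF _ assms] vlist_frame_sup[OF _ assms] by blast

lemma vlist_same:
  assumes "vhead c' = vhead c" and "heap c' = heap c"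
  shows "vlist c' = vlist c"
  using assms by (intro vlist_frame) auto

lemma vlist_push:
  assumes "vhead c' = m" and "heap c' = heap c" and "heap c m = Some nd"
    and "vnext nd = Some (vhead c)"
  shows "vlist c' = insert m (vlist c)"
proof
  show "vlist c' \<subseteq> insert m (vlist c)"
  proof
    fix x assume "x \<in> vlist c'"
    then show "x \<in> insert m (vlist c)"
    proof (induction rule: vlist.induct)
      case vl_head then show ?case using assms by simp
    next
      case (vl_next n nd' k)
      then show ?case using assms vlist.vl_head vlist.vl_next by fastforce
    qed
  qed
next
  have "vhead c \<in> vlist c'" using assms vlist.vl_head vlist.vl_next by metis
  have "x \<in> vlist c'" if "x \<in> vlist c" for x
    using that
  proof (induction rule: vlist.induct)
    case vl_head then show ?case by fact
  next
    case (vl_next n nd' k)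
    then show ?case using assms vlist.vl_next by metis
  qed
  moreover have "m \<in> vlist c'" using assms vlist.vl_head by metis
  ultimately show "insert m (vlist c) \<subseteq> vlist c'" by blast
qed

lemma vlist_initial:
  assumes "vhead c = n0" "heap c = [n0 \<mapsto> \<lparr>vval = v, vnext = None, vts = Some t\<rparr>]"
  shows "vlist c = {n0}"
proof
  show "vlist c \<subseteq> {n0}"
  proof
    fix x assume "x \<in> vlist c"
    then show "x \<in> {n0}"
      by (induction rule: vlist.induct) (use assms in \<open>auto split: if_splits\<close>)
  qed
qed (use assms vlist.vl_head in auto)

definition vinv :: "('p, 'v) conf \<Rightarrow> bool" where
  "vinv c \<longleftrightarrow>
    (\<forall>n\<in>vlist c. heap c n \<noteq> None) \<and>
    (\<forall>n nd. n \<in> vlist c \<longrightarrow> heap c n = Some nd \<longrightarrow> vts nd = None \<longrightarrow> n = vhead c) \<and>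
    (\<forall>p n k. pcs c p = Init_ReadTS n k \<longrightarrow> n \<in> vlist c) \<and>
    (\<forall>p n k. pcs c p = Init_ReadCam n k \<longrightarrow> n \<in> vlist c) \<and>
    (\<forall>p n t k. pcs c p = Init_CAS n t k \<longrightarrow> n \<in> vlist c) \<and>
    (\<forall>p ov nv h. pcs c p = VCAS_Check ov nv h \<longrightarrow> h \<in> vlist c \<and>
        (\<exists>nd. heap c h = Some nd \<and> vts nd \<noteq> None)) \<and>
    (\<forall>p h m. pcs c p = VCAS_CAS h m \<longrightarrow> h \<in> vlist c \<and>
        (\<exists>nd. heap c h = Some nd \<and> vts nd \<noteq> None) \<and> m \<notin> vlist c \<and>
        (\<exists>nd. heap c m = Some nd \<and> vnext nd = Some h \<and> vts nd = None)) \<and>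
    (\<forall>p q h m h' m'. pcs c p = VCAS_CAS h m \<longrightarrow> pcs c q = VCAS_CAS h' m' \<longrightarrow> p \<noteq> q \<longrightarrow> m \<noteq> m')"

lemma inv_initial: "initial c \<Longrightarrow> vinv c"
  unfolding initial_def vinv_def
  apply (elim exE conjE)
  apply (frule (1) vlist_initial)
  apply (simp)
  apply (intro conjI allI; metis pc.distinct)
  done

lemma setpc_simps[simp]:
  "vhead (setpc c p x) = vhead c" "heap (setpc c p x) = heap c" "cam (setpc c p x) = cam c"
  "pcs (setpc c p x) q = (if q = p then x else pcs c q)"
  by (auto simp: setpc_def)

lemma vlist_setpc[simp]: "vlist (setpc c p x) = vlist c"
  by (rule vlist_same) auto

lemma cont_ne[simp]:
  "cont n k \<noteq> Init_ReadTS a b" "cont n k \<noteq> Init_ReadCam a b" "cont n k \<noteq> Init_CAS a t b"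
  "cont n k \<noteq> VCAS_CAS h m"
  by (cases k; simp)+

lemma cont_check[simp]: "cont n k = VCAS_Check ov nv h \<longleftrightarrow> h = n \<and> k = AfterVCAS ov nv"
  by (cases k) auto

lemma rs_next_cases: "rs_next t x = Idle \<or> (\<exists>m. rs_next t x = RS_Loop t m)"
  by (cases x) (auto split: option.splits)

lemma rs_next_ne[simp]:
  "rs_next t x \<noteq> Init_ReadTS a b" "rs_next t x \<noteq> Init_ReadCam a b" "rs_next t x \<noteq> Init_CAS a t' b"
  "rs_next t x \<noteq> VCAS_CAS h m" "rs_next t x \<noteq> VCAS_Check ov nv h"
  using rs_next_cases[of t x] by auto

lemma vinv_setpc:
  assumes I: "vinv c"
    and a1: "\<And>n k. x = Init_ReadTS n k \<Longrightarrow> n \<in> vlist c"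
    and a2: "\<And>n k. x = Init_ReadCam n k \<Longrightarrow> n \<in> vlist c"
    and a3: "\<And>n t k. x = Init_CAS n t k \<Longrightarrow> n \<in> vlist c"
    and a4: "\<And>ov nv h. x = VCAS_Check ov nv h \<Longrightarrow> h \<in> vlist c \<and> (\<exists>nd. heap c h = Some nd \<and> vts nd \<noteq> None)"
    and a5: "\<And>h m. x \<noteq> VCAS_CAS h m"
  shows "vinv (setpc c p x)"
  unfolding vinv_def vlist_setpc setpc_simps
  using I a1 a2 a3 a4 a5 unfolding vinv_def by (auto split: if_splits)

lemma inv_step: "pstep p c c' \<Longrightarrow> vinv c \<Longrightarrow> vinv c'"
proof (induction rule: pstep.induct)
  case (snap_cas_ok c p t)
  have "vlist ((setpc c p Idle)\<lparr>cam := t + 1\<rparr>) = vlist c" by (rule vlist_same) auto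
  then show ?case using snap_cas_ok unfolding vinv_def by auto
next
  case (init_valid c p n k)
  then have nin: "n \<in> vlist c" unfolding vinv_def by metis
  with init_valid obtain nd where "heap c n = Some nd" unfolding vinv_def by auto
  then show ?case using init_valid nin unfolding vinv_def by auto
next
  case (init_cas c p n t k)
  let ?c' = "(setpc c p (cont n k))\<lparr>heap := (heap c)(n :=
        map_option (\<lambda>nd. if vts nd = None then nd\<lparr>vts := Some t\<rparr> else nd) (heap c n))\<rparr>"
  have vl: "vlist ?c' = vlist c" 
    by (rule vlist_frame; cases "heap c n") auto
  have nin: "n \<in> vlist c" using init_cas unfolding vinv_def by metis
  with init_cas obtain nd0 where nd0: "heap c n = Some nd0" unfolding vinv_def by auto
  define nd1 where "nd1 = (if vts nd0 = None then nd0\<lparr>vts := Some t\<rparr> else nd0)"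
  have h': "heap ?c' = (heap c)(n := Some nd1)" using nd0 by (simp add: nd1_def)
  have v1: "vts nd1 \<noteq> None" by (simp add: nd1_def)
  have I: "vinv c" by fact
  have pc': "pcs ?c' q = (if q = p then cont n k else pcs c q)" for q by simp
  have nm: "pcs c q = VCAS_CAS h m \<Longrightarrow> m \<noteq> n" for q h m using I nin unfolding vinv_def by metis
  show ?case
    unfolding vinv_def vl h' pc' using I v1 nin nm unfolding vinv_def
    by (auto split: if_splits)
next
  case (vcas_alloc c p ov nv h m)
  let ?c' = "(setpc c p (VCAS_CAS h m))\<lparr>heap := (heap c)(m \<mapsto>
        \<lparr>vval = nv, vnext = Some h, vts = None\<rparr>)\<rparr>"
  have vl: "vlist ?c' = vlist c" using vcas_alloc unfolding vinv_def by (intro vlist_frame) auto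
  have I: "vinv c" by fact
  obtain hd where hin: "h \<in> vlist c" and hd: "heap c h = Some hd" "vts hd \<noteq> None"
    using I vcas_alloc(1) unfolding vinv_def by metis
  have hm: "h \<noteq> m" using hd vcas_alloc(4) by auto
  have mnot: "m \<notin> vlist c" using I vcas_alloc(4) unfolding vinv_def by auto
  have pm: "pcs c q = VCAS_CAS h' m' \<Longrightarrow> m' \<noteq> m" for q h' m'
    using I vcas_alloc(4) unfolding vinv_def by fastforce
  have ph: "pcs c q = VCAS_CAS h' m' \<Longrightarrow> h' \<noteq> m" for q h' m'
    using I vcas_alloc(4) unfolding vinv_def by fastforce
  have pc': "pcs ?c' q = (if q = p then VCAS_CAS h m else pcs c q)" for q by simp
  have h': "heap ?c' = (heap c)(m := Some \<lparr>vval = nv, vnext = Some h, vts = None\<rparr>)" by simp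
  show ?case unfolding vinv_def vl pc' h' using I hin hd hm mnot pm ph vcas_alloc(1)
    unfolding vinv_def by (auto split: if_splits)
next
  case (vcas_cas_ok c p h m)
  let ?c' = "(setpc c p (Init_ReadTS m AfterDone))\<lparr>vhead := m\<rparr>"
  have I: "vinv c" by fact
  obtain hd nd where hd: "heap c h = Some hd" "vts hd \<noteq> None" and mnot: "m \<notin> vlist c"
    and mnd: "heap c m = Some nd" "vnext nd = Some h" "vts nd = None"
    using I vcas_cas_ok(1) unfolding vinv_def by metis
  have pm: "pcs c q = VCAS_CAS h' m' \<Longrightarrow> q \<noteq> p \<Longrightarrow> m' \<noteq> m" for q h' m'
    using I vcas_cas_ok(1) unfolding vinv_def by metis
  have vl: "vlist ?c' = insert m (vlist c)" using vcas_cas_ok mnd by (intro vlist_push) auto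
  have pc': "pcs ?c' q = (if q = p then Init_ReadTS m AfterDone else pcs c q)" for q by simp
  have h': "heap ?c' = heap c" "vhead ?c' = m" by simp_all
  show ?case unfolding vinv_def vl pc' h' using I hd mnot mnd pm vcas_cas_ok(2)
    unfolding vinv_def by (auto split: if_splits)
next
  case (vcas_cas_fail c p h m)
  let ?c' = "(setpc c p VCAS_FailRead)\<lparr>heap := (heap c)(m := None)\<rparr>"
  have I: "vinv c" by fact
  have mnot: "m \<notin> vlist c" using I vcas_cas_fail(1) unfolding vinv_def by metis
  have pm: "pcs c q = VCAS_CAS h' m' \<Longrightarrow> q \<noteq> p \<Longrightarrow> m' \<noteq> m" for q h' m'
    using I vcas_cas_fail(1) unfolding vinv_def by metis
  have vl: "vlist ?c' = vlist c" using mnot by (intro vlist_frame) auto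
  have pc': "pcs ?c' q = (if q = p then VCAS_FailRead else pcs c q)" for q by simp
  have h': "heap ?c' = (heap c)(m := None)" "vhead ?c' = vhead c" by simp_all
  have nm: "n \<in> vlist c \<Longrightarrow> n \<noteq> m" for n using mnot by auto
  show ?case unfolding vinv_def vl pc' h' using I mnot pm nm
    unfolding vinv_def by (auto split: if_splits)
next
  case (head_read c p k)
  show ?case by (rule vinv_setpc[OF head_read(2)]) (auto simp: vlist.vl_head)
next
  case (init_tbd c p n k)
  have "n \<in> vlist c" using init_tbd unfolding vinv_def by metis
  then show ?case by (intro vinv_setpc[OF init_tbd(3)]) auto
next
  case (init_readcam c p n k)
  have "n \<in> vlist c" using init_readcam unfolding vinv_def by metis
  then show ?case by (intro vinv_setpc[OF init_readcam(2)]) auto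
next
  case (rs_loop c p t n)
  show ?case by (intro vinv_setpc[OF rs_loop(2)]) auto
next
  case (vcas_ret c p ov nv h)
  show ?case by (intro vinv_setpc[OF vcas_ret(3)]) auto
next
  case (vcas_failread c p)
  show ?case by (rule vinv_setpc[OF vcas_failread(2)]) (auto simp: vlist.vl_head)
qed (rule vinv_setpc; simp)+

lemma reach_inv: "reach c \<Longrightarrow> vinv c"
  by (induction rule: reach.induct) (auto intro: inv_initial inv_step)

theorem lemmaA3:
  fixes c :: "('p, 'v) conf"
  assumes "reach c"
    and "n \<in> vlist c"
    and "heap c n = Some nd"
    and "vts nd = None"
  shows "n = vhead c"
  using reach_inv[OF assms(1)] assms(2-4) unfolding vinv_def by auto

end
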